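(* Let $G$ be a group with a conjugation-closed generating set $X$ and let $g\in\mathrm{Mon}(X)$. Then $\mathrm{Fact}(G,g,\mathbf I)$ is isomorphic to the poset of nonempty chains of the interval $[1,g]$, ordered by inclusion.
   Context: $\mathrm{Mon}(X)$ is the submonoid generated by $X$; $\ell(x)$ is the minimal length of a product of elements of $X$ equal to $x$; $x\le y$ if there is $x'\in\mathrm{Mon}(X)$ with $xx'=y$ and $\ell(x)+\ell(x')=\ell(y)$; $[1,g]=\{x:x\le g\}$ with this order. A chain is a set $\{y_0<y_1<\cdots<y_k\}$ of elements of $[1,g]$. A linear factorization of $g$ is a row vector $[x_L\ x_1\ \cdots\ x_k\ x_R]$ ($k\ge0$) of elements of $\mathrm{Mon}(X)$ with $x_1,\dots,x_k\ne1$ ($x_L,x_R$ may be trivial), $\ell(x_L)+\ell(x_1)+\cdots+\ell(x_k)+\ell(x_R)=\ell(g)$ and $x_Lx_1\cdots x_kx_R=g$. Writing $x_0=x_L$, $x_{k+1}=x_R$, the merge at position $i\in\{0,\dots,k\}$ replaces the consecutive entries $x_i,x_{i+1}$ by the single entry $x_ix_{i+1}$ (giving a linear factorization with one fewer entry). $\mathrm{Fact}(G,g,\mathbf I)$ is the set of linear factorizations of $g$ with $\mathbf x\le\mathbf y$ iff $\mathbf x$ is obtained from $\mathbf y$ by a finite sequence of merges. *)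

theory Defs
  imports "HOL-Algebra.Generated_Groups"
begin

definition lprod :: "('a, 'b) monoid_scheme \<Rightarrow> 'a list \<Rightarrow> 'a" where
  "lprod G xs = foldr (\<lambda>x y. x \<otimes>\<^bsub>G\<^esub> y) xs \<one>\<^bsub>G\<^esub>"

definition Mon :: "('a, 'b) monoid_scheme \<Rightarrow> 'a set \<Rightarrow> 'a set" where
  "Mon G X = {lprod G xs | xs. set xs \<subseteq> X}"

definition len :: "('a, 'b) monoid_scheme \<Rightarrow> 'a set \<Rightarrow> 'a \<Rightarrow> nat" where
  "len G X x = (LEAST n. \<exists>xs. length xs = n \<and> set xs \<subseteq> X \<and> lprod G xs = x)"

definition pre_le :: "('a, 'b) monoid_scheme \<Rightarrow> 'a set \<Rightarrow> 'a \<Rightarrow> 'a \<Rightarrow> bool" where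
  "pre_le G X x y \<longleftrightarrow> x \<in> Mon G X \<and> y \<in> Mon G X \<and>
     (\<exists>x' \<in> Mon G X. x \<otimes>\<^bsub>G\<^esub> x' = y \<and> len G X x + len G X x' = len G X y)"

definition interval :: "('a, 'b) monoid_scheme \<Rightarrow> 'a set \<Rightarrow> 'a \<Rightarrow> 'a set" where
  "interval G X g = {x. pre_le G X x g}"

definition nonempty_chains :: "('a, 'b) monoid_scheme \<Rightarrow> 'a set \<Rightarrow> 'a \<Rightarrow> 'a set set" where
  "nonempty_chains G X g = {C. C \<subseteq> interval G X g \<and> finite C \<and> C \<noteq> {} \<and>
     (\<forall>a\<in>C. \<forall>b\<in>C. pre_le G X a b \<or> pre_le G X b a)}"

text \<open>Linear factorizations [x_L, x_1, ..., x_k, x_R] of g, as lists of length k+2.\<close>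
definition linfact :: "('a, 'b) monoid_scheme \<Rightarrow> 'a set \<Rightarrow> 'a \<Rightarrow> 'a list set" where
  "linfact G X g = {xs. length xs \<ge> 2 \<and> set xs \<subseteq> Mon G X \<and>
     (\<forall>i. 0 < i \<and> i < length xs - 1 \<longrightarrow> xs ! i \<noteq> \<one>\<^bsub>G\<^esub>) \<and>
     (\<Sum>x\<leftarrow>xs. len G X x) = len G X g \<and> lprod G xs = g}"

definition merge_at :: "('a, 'b) monoid_scheme \<Rightarrow> nat \<Rightarrow> 'a list \<Rightarrow> 'a list" where
  "merge_at G i xs = take i xs @ [xs ! i \<otimes>\<^bsub>G\<^esub> xs ! Suc i] @ drop (Suc (Suc i)) xs"

definition merge_step :: "('a, 'b) monoid_scheme \<Rightarrow> 'a set \<Rightarrow> 'a \<Rightarrow> ('a list \<times> 'a list) set" where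
  "merge_step G X g = {(ys, xs). ys \<in> linfact G X g \<and> xs \<in> linfact G X g \<and>
     (\<exists>i. Suc i < length ys \<and> xs = merge_at G i ys)}"

definition fact_le :: "('a, 'b) monoid_scheme \<Rightarrow> 'a set \<Rightarrow> 'a \<Rightarrow> 'a list \<Rightarrow> 'a list \<Rightarrow> bool" where
  "fact_le G X g xs ys \<longleftrightarrow> xs \<in> linfact G X g \<and> ys \<in> linfact G X g \<and>
     (ys, xs) \<in> (merge_step G X g)\<^sup>*"

end

theory Submission
  imports Defs
begin

definition tight :: "('a, 'b) monoid_scheme \<Rightarrow> 'a set \<Rightarrow> 'a list \<Rightarrow> bool" where
  "tight G X xs \<longleftrightarrow> set xs \<subseteq> Mon G X \<and> len G X (lprod G xs) = (\<Sum>x\<leftarrow>xs. len G X x)"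

definition pref :: "('a, 'b) monoid_scheme \<Rightarrow> 'a list \<Rightarrow> nat \<Rightarrow> 'a" where
  "pref G xs j = lprod G (take j xs)"

definition chn :: "('a, 'b) monoid_scheme \<Rightarrow> 'a list \<Rightarrow> 'a set" where
  "chn G xs = pref G xs ` {1..length xs - 1}"

lemma lprod_Nil[simp]: "lprod G [] = \<one>\<^bsub>G\<^esub>" by (simp add: lprod_def)
lemma lprod_Cons[simp]: "lprod G (x#xs) = x \<otimes>\<^bsub>G\<^esub> lprod G xs" by (simp add: lprod_def)

locale fg = group G for G (structure) +
  fixes X g
  assumes XG: "X \<subseteq> carrier G" and gM: "g \<in> Mon G X"
begin

lemma lprod_carrier: "set xs \<subseteq> carrier G \<Longrightarrow> lprod G xs \<in> carrier G"
  by (induct xs) auto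

lemma lprod_append: "set xs \<subseteq> carrier G \<Longrightarrow> set ys \<subseteq> carrier G \<Longrightarrow>
   lprod G (xs @ ys) = lprod G xs \<otimes> lprod G ys"
  by (induct xs) (auto simp: m_assoc lprod_carrier)

lemma Mon_carrier: "Mon G X \<subseteq> carrier G"
  unfolding Mon_def using XG lprod_carrier by blast

lemma MonC: "x \<in> Mon G X \<Longrightarrow> x \<in> carrier G" using Mon_carrier by blast

lemma one_Mon: "\<one> \<in> Mon G X"
  unfolding Mon_def by (rule CollectI, rule exI[of _ "[]"]) simp

lemma Mon_mult: "a \<in> Mon G X \<Longrightarrow> b \<in> Mon G X \<Longrightarrow> a \<otimes> b \<in> Mon G X"
proof -
  assume "a \<in> Mon G X" "b \<in> Mon G X"
  then obtain as bs where "set as \<subseteq> X" "a = lprod G as" "set bs \<subseteq> X" "b = lprod G bs"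
    unfolding Mon_def by blast
  then show ?thesis unfolding Mon_def using XG
    by (intro CollectI exI[of _ "as @ bs"]) (auto simp: lprod_append)
qed

lemma lprod_Mon: "set xs \<subseteq> Mon G X \<Longrightarrow> lprod G xs \<in> Mon G X"
  by (induct xs) (auto simp: one_Mon Mon_mult)

lemma len_word: "x \<in> Mon G X \<Longrightarrow> \<exists>ws. length ws = len G X x \<and> set ws \<subseteq> X \<and> lprod G ws = x"
  unfolding len_def Mon_def by (rule LeastI_ex) blast

lemma len_le: "set ws \<subseteq> X \<Longrightarrow> lprod G ws = x \<Longrightarrow> len G X x \<le> length ws"
  unfolding len_def by (rule Least_le) blast

lemma len_one: "len G X \<one> = 0"
  using len_le[of "[]"] by simp

lemma len_zero: "x \<in> Mon G X \<Longrightarrow> len G X x = 0 \<Longrightarrow> x = \<one>"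
  using len_word by fastforce

lemma len_pos: "x \<in> Mon G X \<Longrightarrow> x \<noteq> \<one> \<Longrightarrow> 0 < len G X x"
  using len_zero by blast

lemma len_mult: "a \<in> Mon G X \<Longrightarrow> b \<in> Mon G X \<Longrightarrow> len G X (a \<otimes> b) \<le> len G X a + len G X b"
proof -
  assume "a \<in> Mon G X" "b \<in> Mon G X"
  then obtain wa wb where "length wa = len G X a" "set wa \<subseteq> X" "lprod G wa = a"
     "length wb = len G X b" "set wb \<subseteq> X" "lprod G wb = b" using len_word by blast
  then show ?thesis using len_le[of "wa @ wb" "a \<otimes> b"] XG by (auto simp: lprod_append)
qed

lemma len_lprod: "set xs \<subseteq> Mon G X \<Longrightarrow> len G X (lprod G xs) \<le> (\<Sum>x\<leftarrow>xs. len G X x)"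
proof (induct xs)
  case Nil then show ?case by (simp add: len_one)
next
  case (Cons x xs)
  then show ?case using len_mult[of x "lprod G xs"] lprod_Mon[of xs] by auto
qed

lemma tight_sub: assumes "tight G X (as @ bs @ cs)" shows "tight G X bs"
proof -
  have M: "set as \<subseteq> Mon G X" "set bs \<subseteq> Mon G X" "set cs \<subseteq> Mon G X"
    using assms unfolding tight_def by auto
  hence C: "set as \<subseteq> carrier G" "set bs \<subseteq> carrier G" "set cs \<subseteq> carrier G"
    using Mon_carrier by auto
  have e: "lprod G (as @ bs @ cs) = lprod G as \<otimes> (lprod G bs \<otimes> lprod G cs)"
    using C by (simp add: lprod_append)
  have "len G X (lprod G (as @ bs @ cs)) \<le> len G X (lprod G as) + len G X (lprod G bs \<otimes> lprod G cs)"
    unfolding e using M by (intro len_mult lprod_Mon Mon_mult) auto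
  also have "\<dots> \<le> len G X (lprod G as) + (len G X (lprod G bs) + len G X (lprod G cs))"
    using M by (intro add_left_mono len_mult lprod_Mon) auto
  finally have 1: "len G X (lprod G (as @ bs @ cs)) \<le> len G X (lprod G as) + (len G X (lprod G bs) + len G X (lprod G cs))" .
  have 2: "len G X (lprod G (as @ bs @ cs)) = (\<Sum>x\<leftarrow>as. len G X x) + (\<Sum>x\<leftarrow>bs. len G X x) + (\<Sum>x\<leftarrow>cs. len G X x)"
    using assms unfolding tight_def by simp
  have "len G X (lprod G as) \<le> (\<Sum>x\<leftarrow>as. len G X x)" "len G X (lprod G bs) \<le> (\<Sum>x\<leftarrow>bs. len G X x)"
       "len G X (lprod G cs) \<le> (\<Sum>x\<leftarrow>cs. len G X x)" using M len_lprod by auto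
  then show ?thesis using 1 2 M unfolding tight_def by linarith
qed

lemma lfD: assumes "xs \<in> linfact G X g"
  shows "2 \<le> length xs" "set xs \<subseteq> Mon G X" "set xs \<subseteq> carrier G"
    "\<And>i. 0 < i \<Longrightarrow> i < length xs - 1 \<Longrightarrow> xs ! i \<noteq> \<one>"
    "(\<Sum>x\<leftarrow>xs. len G X x) = len G X g" "lprod G xs = g" "tight G X xs"
  using assms Mon_carrier unfolding linfact_def tight_def by auto

lemma len_pref: assumes "xs \<in> linfact G X g"
  shows "len G X (pref G xs j) = (\<Sum>x\<leftarrow>take j xs. len G X x)"
  using tight_sub[of "[]" "take j xs" "drop j xs"] lfD(7)[OF assms]
  unfolding tight_def pref_def by simp

lemma pref_Mon: "xs \<in> linfact G X g \<Longrightarrow> pref G xs j \<in> Mon G X"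
  unfolding pref_def using lfD(2) set_take_subset by (metis lprod_Mon order_trans)

lemma sum_take_add: "(\<Sum>x\<leftarrow>take (a + b) xs. len G X x) =
   (\<Sum>x\<leftarrow>take a xs. len G X x) + (\<Sum>x\<leftarrow>take b (drop a xs). len G X x)"
  by (simp add: take_add)

lemma pref_strict: assumes "xs \<in> linfact G X g" "1 \<le> j" "j < j'" "j' \<le> length xs - 1"
  shows "len G X (pref G xs j) < len G X (pref G xs j')"
proof -
  have jl: "j < length xs" using assms by auto
  have "xs ! j \<noteq> \<one>" using lfD(4)[OF assms(1), of j] assms by auto
  moreover have "xs ! j \<in> Mon G X" using lfD(2)[OF assms(1)] jl by auto
  ultimately have p: "0 < len G X (xs ! j)" using len_pos by blast
  have "(\<Sum>x\<leftarrow>take j' xs. len G X x) = (\<Sum>x\<leftarrow>take (Suc j) xs. len G X x) +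
      (\<Sum>x\<leftarrow>take (j' - Suc j) (drop (Suc j) xs). len G X x)"
    using sum_take_add[of "Suc j" "j' - Suc j" xs] assms by simp
  also have "(\<Sum>x\<leftarrow>take (Suc j) xs. len G X x) = (\<Sum>x\<leftarrow>take j xs. len G X x) + len G X (xs ! j)"
    using jl by (simp add: take_Suc_conv_app_nth)
  finally show ?thesis using p len_pref[OF assms(1)] by simp
qed

lemma pref_full: "xs \<in> linfact G X g \<Longrightarrow> pref G xs (length xs) = g"
  unfolding pref_def using lfD(6) by simp

lemma pref_le: assumes "xs \<in> linfact G X g" "j \<le> j'" "j' \<le> length xs"
  shows "pre_le G X (pref G xs j) (pref G xs j')"
proof -
  define w where "w = lprod G (take (j' - j) (drop j xs))"
  have dec: "xs = take j xs @ take (j' - j) (drop j xs) @ drop j' xs"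
    using assms take_add[of j "j' - j" xs] by (metis append.assoc append_take_drop_id le_add_diff_inverse)
  have C: "set xs \<subseteq> carrier G" using lfD(3)[OF assms(1)] .
  have tw: "tight G X (take (j' - j) (drop j xs))"
    using tight_sub[of "take j xs" "take (j' - j) (drop j xs)" "drop j' xs"] dec lfD(7)[OF assms(1)] by simp
  have wM: "w \<in> Mon G X" using tw unfolding tight_def w_def using lprod_Mon by blast
  have e: "pref G xs j \<otimes> w = pref G xs j'"
  proof -
    have "set (take j xs) \<subseteq> carrier G" "set (take (j' - j) (drop j xs)) \<subseteq> carrier G"
      using C by (meson dual_order.trans set_drop_subset set_take_subset)+
    then show ?thesis unfolding pref_def w_def using take_add[of j "j' - j" xs] assms
      by (simp add: lprod_append)
  qed
  have l: "len G X (pref G xs j) + len G X w = len G X (pref G xs j')"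
    using len_pref[OF assms(1)] tw sum_take_add[of j "j' - j" xs] assms unfolding tight_def w_def by simp
  show ?thesis unfolding pre_le_def using pref_Mon[OF assms(1)] wM e l by blast
qed

lemma pref_inj: assumes "xs \<in> linfact G X g" shows "inj_on (pref G xs) {1..length xs - 1}"
proof
  fix j j' assume "j \<in> {1..length xs - 1}" "j' \<in> {1..length xs - 1}" "pref G xs j = pref G xs j'"
  then show "j = j'" using pref_strict[OF assms, of j j'] pref_strict[OF assms, of j' j]
    by (metis atLeastAtMost_iff linorder_neqE_nat less_irrefl)
qed

lemma len_inj_chn: assumes "xs \<in> linfact G X g" "a \<in> chn G xs" "b \<in> chn G xs"
   "len G X a = len G X b" shows "a = b"
  using assms pref_strict[OF assms(1)] unfolding chn_def
  by (auto, metis atLeastAtMost_iff linorder_neqE_nat less_irrefl)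

lemma card_chn: "xs \<in> linfact G X g \<Longrightarrow> card (chn G xs) = length xs - 1"
  unfolding chn_def using pref_inj by (simp add: card_image)

lemma pre_le_refl: "x \<in> Mon G X \<Longrightarrow> pre_le G X x x"
  unfolding pre_le_def using one_Mon len_one MonC by force

lemma chn_nc: assumes "xs \<in> linfact G X g" shows "chn G xs \<in> nonempty_chains G X g"
proof -
  have n: "2 \<le> length xs" using lfD(1)[OF assms] .
  have "chn G xs \<subseteq> interval G X g"
    unfolding chn_def interval_def using pref_le[OF assms, of _ "length xs"] pref_full[OF assms] by auto
  moreover have "chn G xs \<noteq> {}" unfolding chn_def using n by auto
  moreover have "\<forall>a\<in>chn G xs. \<forall>b\<in>chn G xs. pre_le G X a b \<or> pre_le G X b a"
    unfolding chn_def using pref_le[OF assms] by (auto, metis nat_le_linear le_diff_conv order_trans diff_le_self)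
  ultimately show ?thesis unfolding nonempty_chains_def chn_def by auto
qed

lemma dec3: assumes "Suc i < length xs"
  shows "xs = take i xs @ [xs ! i, xs ! Suc i] @ drop (Suc (Suc i)) xs"
proof -
  have "drop i xs = xs ! i # xs ! Suc i # drop (Suc (Suc i)) xs"
    using assms by (simp add: Cons_nth_drop_Suc)
  then show ?thesis by (metis append_Cons append_Nil append_take_drop_id)
qed

lemma pref_merge: assumes "set xs \<subseteq> carrier G" "Suc i < length xs"
  shows "pref G (merge_at G i xs) j = (if j \<le> i then pref G xs j else pref G xs (Suc j))"
proof (cases "j \<le> i")
  case True
  then show ?thesis unfolding pref_def merge_at_def using assms by (simp add: min_def)
next
  case False
  define r where "r = j - Suc i"
  have r: "j = i + Suc r" using False unfolding r_def by simp
  define D where "D = drop (Suc (Suc i)) xs"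
  have il: "i < length xs" using assms by auto
  have cT: "set (take i xs) \<subseteq> carrier G" using assms(1) by (meson dual_order.trans set_take_subset)
  have cD: "set (take r D) \<subseteq> carrier G" using assms(1) unfolding D_def
    by (meson dual_order.trans set_take_subset set_drop_subset)
  have a: "xs ! i \<in> carrier G" "xs ! Suc i \<in> carrier G" using assms(1,2) nth_mem[of i xs] nth_mem[of "Suc i" xs] by auto
  have m: "take j (merge_at G i xs) = take i xs @ [xs ! i \<otimes> xs ! Suc i] @ take r D"
    unfolding merge_at_def D_def r using il by simp
  have "take (Suc j) xs = take (Suc j) (take i xs @ [xs ! i, xs ! Suc i] @ D)"
    using dec3[OF assms(2)] unfolding D_def by simp
  also have "\<dots> = take i xs @ [xs ! i, xs ! Suc i] @ take r D" unfolding r using il by simp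
  finally have t: "take (Suc j) xs = take i xs @ [xs ! i, xs ! Suc i] @ take r D" .
  show ?thesis using False unfolding pref_def m t using cT cD a
    by (simp add: lprod_append m_assoc lprod_carrier)
qed

lemma merge_lf: assumes "xs \<in> linfact G X g" "Suc i < length xs" "3 \<le> length xs"
  shows "merge_at G i xs \<in> linfact G X g"
proof -
  define T where "T = take i xs"
  define D where "D = drop (Suc (Suc i)) xs"
  define a where "a = xs ! i"
  define b where "b = xs ! Suc i"
  have dec: "xs = T @ [a, b] @ D" using dec3[OF assms(2)] unfolding T_def D_def a_def b_def .
  have mg: "merge_at G i xs = T @ [a \<otimes> b] @ D" unfolding merge_at_def T_def D_def a_def b_def by simp
  have M: "set xs \<subseteq> Mon G X" using lfD(2)[OF assms(1)] .
  have MT: "set T \<subseteq> Mon G X" "set D \<subseteq> Mon G X" "a \<in> Mon G X" "b \<in> Mon G X"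
    using M assms(2) set_take_subset[of i xs] set_drop_subset[of "Suc (Suc i)" xs] nth_mem[of i xs]
      nth_mem[of "Suc i" xs] unfolding T_def D_def a_def b_def by auto
  have CT: "set T \<subseteq> carrier G" "set D \<subseteq> carrier G" "a \<in> carrier G" "b \<in> carrier G"
    using MT Mon_carrier by auto
  have tab: "tight G X [a, b]" using tight_sub[of T "[a,b]" D] lfD(7)[OF assms(1)] dec by simp
  have lab: "len G X (a \<otimes> b) = len G X a + len G X b"
    using tab CT unfolding tight_def by simp
  have lT: "length T = i" unfolding T_def using assms by simp
  have ln: "length xs = i + 2 + length D" unfolding D_def using assms(2) by simp
  have "length (merge_at G i xs) \<ge> 2" using mg ln assms(3) lT by simp
  moreover have "set (merge_at G i xs) \<subseteq> Mon G X" using mg MT Mon_mult by auto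
  moreover have "\<forall>p. 0 < p \<and> p < length (merge_at G i xs) - 1 \<longrightarrow> merge_at G i xs ! p \<noteq> \<one>"
  proof (intro allI impI)
    fix p assume p: "0 < p \<and> p < length (merge_at G i xs) - 1"
    have lm: "length (merge_at G i xs) = i + 1 + length D" using mg lT by simp
    consider "p < i" | "p = i" | "i < p" by linarith
    then show "merge_at G i xs ! p \<noteq> \<one>"
    proof cases
      case 1
      then have "merge_at G i xs ! p = xs ! p" unfolding mg using lT
        by (simp add: nth_append T_def)
      then show ?thesis using lfD(4)[OF assms(1), of p] p 1 lm ln by simp
    next
      case 2
      then have "merge_at G i xs ! p = a \<otimes> b" unfolding mg using lT by (simp add: nth_append)
      moreover have "a \<noteq> \<one>" using lfD(4)[OF assms(1), of i] p 2 lm ln unfolding a_def by simp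
      then have "0 < len G X (a \<otimes> b)" using lab len_pos[OF MT(3)] by simp
      ultimately show ?thesis using len_one by auto
    next
      case 3
      then have "merge_at G i xs ! p = D ! (p - Suc i)" unfolding mg using lT by (simp add: nth_append)
      moreover have "xs ! Suc p = D ! (p - Suc i)" using dec lT 3 by (simp add: nth_append)
      ultimately show ?thesis using lfD(4)[OF assms(1), of "Suc p"] p 3 lm ln by simp
    qed
  qed
  moreover have "(\<Sum>x\<leftarrow>merge_at G i xs. len G X x) = len G X g"
    using lfD(5)[OF assms(1)] lab unfolding mg by (subst (asm) dec) simp
  moreover have "lprod G (merge_at G i xs) = g"
    using lfD(6)[OF assms(1)] CT unfolding mg by (subst (asm) dec) (simp add: lprod_append m_assoc lprod_carrier)
  ultimately show ?thesis unfolding linfact_def by blast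
qed

lemma chn_merge: assumes "xs \<in> linfact G X g" "Suc i < length xs"
  shows "chn G (merge_at G i xs) = chn G xs - {pref G xs (Suc i)}"
proof -
  define n where "n = length xs"
  have lm: "length (merge_at G i xs) = n - 1" unfolding merge_at_def n_def using assms by simp
  have C: "set xs \<subseteq> carrier G" using lfD(3)[OF assms(1)] .
  have "chn G (merge_at G i xs) = pref G xs ` ({1..n - 1} - {Suc i})"
  proof
    show "chn G (merge_at G i xs) \<subseteq> pref G xs ` ({1..n - 1} - {Suc i})"
    proof
      fix y assume "y \<in> chn G (merge_at G i xs)"
      then obtain j where j: "1 \<le> j" "j \<le> n - 1 - 1" "y = pref G (merge_at G i xs) j"
        unfolding chn_def lm by auto
      show "y \<in> pref G xs ` ({1..n - 1} - {Suc i})"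
      proof (cases "j \<le> i")
        case True
        then have "y = pref G xs j" using j pref_merge[OF C assms(2), of j] by simp
        moreover have "j \<in> {1..n - 1} - {Suc i}" using True j by simp
        ultimately show ?thesis by blast
      next
        case False
        then have "y = pref G xs (Suc j)" using j pref_merge[OF C assms(2), of j] by simp
        moreover have "Suc j \<in> {1..n - 1} - {Suc i}" using False j by simp
        ultimately show ?thesis by blast
      qed
    qed
  next
    show "pref G xs ` ({1..n - 1} - {Suc i}) \<subseteq> chn G (merge_at G i xs)"
    proof
      fix y assume "y \<in> pref G xs ` ({1..n - 1} - {Suc i})"
      then obtain j where j0: "j \<in> {1..n - 1} - {Suc i}" "y = pref G xs j" by (rule imageE)
      then have j: "1 \<le> j" "j \<le> n - 1" "j \<noteq> Suc i" "y = pref G xs j" by auto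
      show "y \<in> chn G (merge_at G i xs)"
      proof (cases "j \<le> i")
        case True
        then have "y = pref G (merge_at G i xs) j" using j pref_merge[OF C assms(2), of j] by simp
        moreover have "j \<in> {1..length (merge_at G i xs) - 1}" using True j assms(2) lm n_def by simp
        ultimately show ?thesis unfolding chn_def by blast
      next
        case False
        then have "\<not> (j - 1 \<le> i)" "Suc (j - 1) = j" using j by auto
        then have "y = pref G (merge_at G i xs) (j - 1)" using j pref_merge[OF C assms(2), of "j - 1"] by simp
        moreover have "1 \<le> j - 1" "j - 1 \<le> length (merge_at G i xs) - 1" using False j assms(2) lm n_def by linarith+
        then have "j - 1 \<in> {1..length (merge_at G i xs) - 1}" by simp
        ultimately show ?thesis unfolding chn_def by blast
      qed
    qed
  qed
  also have "\<dots> = pref G xs ` {1..n - 1} - pref G xs ` {Suc i}"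
    using pref_inj[OF assms(1)] assms(2) unfolding n_def by (intro inj_on_image_set_diff) auto
  finally show ?thesis unfolding chn_def n_def by simp
qed

lemma pref_Suc: "j < length xs \<Longrightarrow> set xs \<subseteq> carrier G \<Longrightarrow> pref G xs (Suc j) = pref G xs j \<otimes> xs ! j"
proof -
  assume a: "j < length xs" "set xs \<subseteq> carrier G"
  have "set (take j xs) \<subseteq> carrier G" using a(2) by (meson dual_order.trans set_take_subset)
  moreover have "xs ! j \<in> carrier G" using a nth_mem by blast
  ultimately show ?thesis unfolding pref_def using a by (simp add: take_Suc_conv_app_nth lprod_append)
qed

lemma chn_inj: assumes "xs \<in> linfact G X g" "ys \<in> linfact G X g" "chn G xs = chn G ys"
  shows "xs = ys"
proof -
  have n: "length xs = length ys" using card_chn[OF assms(1)] card_chn[OF assms(2)] assms(3)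
    lfD(1)[OF assms(1)] lfD(1)[OF assms(2)] by simp
  define n where "n = length xs"
  have sw: "sorted_wrt (<) (map (\<lambda>j. len G X (pref G zs j)) [1..<n])" if z: "zs \<in> linfact G X g" "length zs = n" for zs
    unfolding sorted_wrt_map using pref_strict[OF z(1)] z(2)
    by (auto simp: sorted_wrt_iff_nth_less)
  have st: "set (map (\<lambda>j. len G X (pref G zs j)) [1..<n]) = len G X ` chn G zs" if "length zs = n" for zs
    unfolding chn_def using that by (auto simp: image_image atLeastLessThan_eq_atLeastAtMost_diff) (force+)
  have eq: "map (\<lambda>j. len G X (pref G xs j)) [1..<n] = map (\<lambda>j. len G X (pref G ys j)) [1..<n]"
  proof (rule sorted_distinct_set_unique)
    have "sorted_wrt (<) (map (\<lambda>j. len G X (pref G xs j)) [1..<n])" "sorted_wrt (<) (map (\<lambda>j. len G X (pref G ys j)) [1..<n])"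
      using sw[OF assms(1)] sw[OF assms(2)] n n_def by auto
    then show "sorted (map (\<lambda>j. len G X (pref G xs j)) [1..<n])" "distinct (map (\<lambda>j. len G X (pref G xs j)) [1..<n])"
      "sorted (map (\<lambda>j. len G X (pref G ys j)) [1..<n])" "distinct (map (\<lambda>j. len G X (pref G ys j)) [1..<n])"
      by (simp_all only: strict_sorted_iff)
    show "set (map (\<lambda>j. len G X (pref G xs j)) [1..<n]) = set (map (\<lambda>j. len G X (pref G ys j)) [1..<n])"
      using st[of xs] st[of ys] n n_def assms(3) by simp
  qed
  have pe: "pref G xs j = pref G ys j" if j: "j \<le> n" for j
  proof -
    consider "j = 0" | "j = n" | "1 \<le> j \<and> j \<le> n - 1" using j by linarith
    then show ?thesis
    proof cases
      case 1 then show ?thesis by (simp add: pref_def)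
    next
      case 2 then show ?thesis using pref_full assms(1,2) n n_def by metis
    next
      case 3
      have "[1..<n] ! (j - 1) = j" using 3 by (subst nth_upt) auto
      moreover have "j - 1 < length [1..<n]" using 3 j by (simp only: length_upt) linarith
      ultimately have "len G X (pref G xs j) = len G X (pref G ys j)"
        using arg_cong[OF eq, of "\<lambda>l. l ! (j - 1)"] by simp
      moreover have "pref G xs j \<in> chn G xs" "pref G ys j \<in> chn G xs"
        unfolding chn_def using 3 assms(3) n n_def by (auto simp: chn_def)
      ultimately show ?thesis using len_inj_chn[OF assms(1)] by blast
    qed
  qed
  show ?thesis
  proof (rule nth_equalityI)
    show "length xs = length ys" by (rule n)
    fix j assume j: "j < length xs"
    have "pref G xs j \<otimes> xs ! j = pref G ys j \<otimes> ys ! j"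
      using pref_Suc[OF j lfD(3)[OF assms(1)]] pref_Suc[of j ys, OF _ lfD(3)[OF assms(2)]] pe[of "Suc j"]
        j n n_def by simp
    then have "pref G xs j \<otimes> xs ! j = pref G xs j \<otimes> ys ! j" using pe[of j] j n_def by simp
    moreover have "pref G xs j \<in> carrier G" using pref_Mon[OF assms(1)] MonC by blast
    moreover have "xs ! j \<in> carrier G" "ys ! j \<in> carrier G"
      using j n lfD(3)[OF assms(1)] lfD(3)[OF assms(2)] nth_mem by (metis subsetD)+
    ultimately show "xs ! j = ys ! j" by (metis Units_eq Units_l_cancel)
  qed
qed

lemma chn_surj: "C \<in> nonempty_chains G X g \<Longrightarrow> \<exists>xs \<in> linfact G X g. chn G xs = C"
proof (induction "card C" arbitrary: C rule: less_induct)
  case less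
  have C: "C \<subseteq> interval G X g" "finite C" "C \<noteq> {}" "\<forall>a\<in>C. \<forall>b\<in>C. pre_le G X a b \<or> pre_le G X b a"
    using less.prems unfolding nonempty_chains_def by auto
  have "Max (len G X ` C) \<in> len G X ` C" using C(2,3) by (intro Max_in) auto
  then obtain m where m: "m \<in> C" "len G X m = Max (len G X ` C)" by force
  have mx: "len G X c \<le> len G X m" if "c \<in> C" for c
    using m(2) C(2) that by simp
  have mi: "pre_le G X m g" using m(1) C(1) unfolding interval_def by auto
  have mM: "m \<in> Mon G X" using mi unfolding pre_le_def by auto
  have below: "pre_le G X c m" if c: "c \<in> C" for c
  proof -
    have "pre_le G X c m \<or> pre_le G X m c" using C(4) c m(1) by blast
    then show ?thesis
    proof
      assume "pre_le G X m c"
      then obtain x' where x': "x' \<in> Mon G X" "m \<otimes> x' = c" "len G X m + len G X x' = len G X c"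
        unfolding pre_le_def by blast
      then have "len G X x' = 0" using mx[OF c] by simp
      then have "x' = \<one>" using len_zero x'(1) by blast
      then have "c = m" using x'(2) MonC[OF mM] by simp
      then show ?thesis using pre_le_refl[OF mM] by simp
    qed
  qed
  obtain v where v: "v \<in> Mon G X" "m \<otimes> v = g" "len G X m + len G X v = len G X g"
    using mi unfolding pre_le_def by blast
  show ?case
  proof (cases "card C = 1")
    case True
    then have Cm: "C = {m}" using m(1) by (metis card_1_singletonE singletonD)
    have "[m, v] \<in> linfact G X g" unfolding linfact_def using mM v MonC[OF v(1)] by auto
    moreover have "chn G [m, v] = {m}" unfolding chn_def pref_def using MonC[OF mM] by simp
    ultimately show ?thesis using Cm by blast
  next
    case False
    then have c2: "2 \<le> card C" using C(2,3) by (metis One_nat_def card_0_eq less_2_cases not_le)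
    define C' where "C' = C - {m}"
    have cC': "card C' = card C - 1" unfolding C'_def using m(1) C(2) by simp
    have "C' \<noteq> {}" using cC' c2 by auto
    then have "C' \<in> nonempty_chains G X g" unfolding nonempty_chains_def
      using C unfolding C'_def by auto
    moreover have "card C' < card C" using cC' c2 by simp
    ultimately obtain xs' where xs': "xs' \<in> linfact G X g" "chn G xs' = C'" using less.hyps by blast
    define n where "n = length xs'"
    have n2: "2 \<le> n" using lfD(1)[OF xs'(1)] n_def by simp
    define q where "q = pref G xs' (n - 1)"
    have qC: "q \<in> C'" using xs'(2) n2 unfolding chn_def q_def n_def by auto
    then have qm: "q \<noteq> m" "q \<in> C" unfolding C'_def by auto
    obtain u where u: "u \<in> Mon G X" "q \<otimes> u = m" "len G X q + len G X u = len G X m"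
      using below[OF qm(2)] unfolding pre_le_def by blast
    have qM: "q \<in> Mon G X" unfolding q_def using pref_Mon[OF xs'(1)] .
    define T where "T = take (n - 1) xs'"
    have lT: "length T = n - 1" unfolding T_def n_def by simp
    have TM: "set T \<subseteq> Mon G X" unfolding T_def using lfD(2)[OF xs'(1)] set_take_subset by (metis order_trans)
    have TC: "set T \<subseteq> carrier G" using TM Mon_carrier by auto
    have qT: "lprod G T = q" unfolding T_def q_def pref_def ..
    define xs where "xs = T @ [u, v]"
    have "xs \<in> linfact G X g" unfolding linfact_def
    proof (intro CollectI conjI allI impI)
      show "2 \<le> length xs" unfolding xs_def by simp
      show "set xs \<subseteq> Mon G X" unfolding xs_def using TM u v by auto
      show "(\<Sum>x\<leftarrow>xs. len G X x) = len G X g"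
        using len_pref[OF xs'(1), of "n - 1"] u v unfolding xs_def q_def T_def by simp
      show "lprod G xs = g" unfolding xs_def using TC u v qT MonC[OF u(1)] MonC[OF v(1)] MonC[OF qM]
        by (simp add: lprod_append m_assoc[symmetric])
      fix p assume p: "0 < p \<and> p < length xs - 1"
      show "xs ! p \<noteq> \<one>"
      proof (cases "p < n - 1")
        case True
        then have "xs ! p = xs' ! p" unfolding xs_def T_def using lT by (simp add: nth_append T_def)
        then show ?thesis using lfD(4)[OF xs'(1), of p] True p n_def by simp
      next
        case False
        then have "p = n - 1" using p lT unfolding xs_def by simp
        then have "xs ! p = u" unfolding xs_def using lT by (simp add: nth_append)
        moreover have "u \<noteq> \<one>" using u(2) qm(1) MonC[OF qM] by auto
        ultimately show ?thesis by simp
      qed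
    qed
    moreover have "chn G xs = C"
    proof -
      have lx: "length xs - 1 = n" unfolding xs_def using lT n2 by simp
      have "{1..n} = insert n {1..n - 1}" using n2 by auto
      then have "chn G xs = insert (pref G xs n) (pref G xs ` {1..n - 1})" unfolding chn_def lx by simp
      moreover have "pref G xs n = m"
      proof -
        have e1: "n - (n - 1) = Suc 0" using n2 by simp
        have "take n xs = T @ [u]" unfolding xs_def using lT n2 e1
          by (simp add: take_append)
        then show ?thesis unfolding pref_def using TC u MonC[OF u(1)] qT by (simp add: lprod_append)
      qed
      moreover have "pref G xs ` {1..n - 1} = pref G xs' ` {1..n - 1}"
      proof (rule image_cong[OF refl])
        fix j assume "j \<in> {1..n - 1}"
        then show "pref G xs j = pref G xs' j" unfolding pref_def xs_def T_def using lT by (simp add: n_def)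
      qed
      ultimately show ?thesis using xs'(2) m(1) unfolding chn_def C'_def n_def by auto
    qed
    ultimately show ?thesis by blast
  qed
qed

lemma ord1: "(ys, xs) \<in> (merge_step G X g)\<^sup>* \<Longrightarrow> chn G xs \<subseteq> chn G ys"
proof (induction rule: rtrancl_induct)
  case base then show ?case by simp
next
  case (step zs ws)
  then obtain i where "zs \<in> linfact G X g" "Suc i < length zs" "ws = merge_at G i zs"
    unfolding merge_step_def by blast
  then have "chn G ws \<subseteq> chn G zs" using chn_merge by blast
  then show ?case using step.IH by blast
qed

lemma ord2: "xs \<in> linfact G X g \<Longrightarrow> ys \<in> linfact G X g \<Longrightarrow> chn G xs \<subseteq> chn G ys \<Longrightarrow>
   (ys, xs) \<in> (merge_step G X g)\<^sup>*"
proof (induction "card (chn G ys - chn G xs)" arbitrary: ys rule: less_induct)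
  case less
  show ?case
  proof (cases "chn G ys - chn G xs = {}")
    case True
    then have "chn G xs = chn G ys" using less.prems by blast
    then have "xs = ys" using chn_inj less.prems by blast
    then show ?thesis by simp
  next
    case False
    then obtain y where y: "y \<in> chn G ys" "y \<notin> chn G xs" by blast
    then obtain j where j: "1 \<le> j" "j \<le> length ys - 1" "y = pref G ys j" unfolding chn_def by auto
    have fin: "finite (chn G ys)" unfolding chn_def by simp
    have ne: "chn G xs \<noteq> {}" using chn_nc[OF less.prems(1)] unfolding nonempty_chains_def by simp
    have "card (insert y (chn G xs)) \<le> card (chn G ys)"
      using less.prems(3) y fin by (intro card_mono) auto
    moreover have "card (insert y (chn G xs)) = Suc (card (chn G xs))"
      using y(2) fin less.prems(3) finite_subset by (metis card_insert_disjoint)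
    moreover have "card (chn G xs) \<ge> 1" using ne fin less.prems(3) finite_subset
      by (metis One_nat_def Suc_leI card_gt_0_iff)
    ultimately have "card (chn G ys) \<ge> 2" by simp
    then have l3: "3 \<le> length ys" using card_chn[OF less.prems(2)] by simp
    define i where "i = j - 1"
    have si: "Suc i < length ys" "Suc i = j" using j l3 unfolding i_def by auto
    define zs where "zs = merge_at G i ys"
    have zl: "zs \<in> linfact G X g" unfolding zs_def using merge_lf[OF less.prems(2) si(1) l3] .
    have zc: "chn G zs = chn G ys - {y}" unfolding zs_def using chn_merge[OF less.prems(2) si(1)] si j by simp
    have st: "(ys, zs) \<in> merge_step G X g" unfolding merge_step_def using zl less.prems(2) si(1) zs_def by blast
    have sub: "chn G xs \<subseteq> chn G zs" using zc less.prems(3) y(2) by blast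
    have "chn G zs - chn G xs = (chn G ys - chn G xs) - {y}" using zc by blast
    then have "card (chn G zs - chn G xs) < card (chn G ys - chn G xs)"
      using y fin by (metis DiffI card_Diff1_less finite_Diff)
    then have "(zs, xs) \<in> (merge_step G X g)\<^sup>*" using less.hyps less.prems(1) zl sub by blast
    then show ?thesis by (rule converse_rtrancl_into_rtrancl[OF st])
  qed
qed

end

theorem proposition3p4:
  fixes G (structure) and X :: "'a set" and g :: 'a
  assumes "group G"
    and "X \<subseteq> carrier G"
    and "generate G X = carrier G"
    and "\<forall>x\<in>X. \<forall>h\<in>carrier G. h \<otimes> x \<otimes> inv h \<in> X"
    and "g \<in> Mon G X"
  shows "\<exists>f. bij_betw f (linfact G X g) (nonempty_chains G X g) \<and>
           (\<forall>xs\<in>linfact G X g. \<forall>ys\<in>linfact G X g.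
              fact_le G X g xs ys \<longleftrightarrow> f xs \<subseteq> f ys)"
proof -
  interpret fg G X g using assms(1,2,5) by (simp add: fg_def fg_axioms_def)
  have "bij_betw (chn G) (linfact G X g) (nonempty_chains G X g)"
    unfolding bij_betw_def
  proof
    show "inj_on (chn G) (linfact G X g)" by (rule inj_onI) (rule chn_inj)
    show "chn G ` linfact G X g = nonempty_chains G X g"
      using chn_nc chn_surj by blast
  qed
  moreover have "\<forall>xs\<in>linfact G X g. \<forall>ys\<in>linfact G X g.
              fact_le G X g xs ys \<longleftrightarrow> chn G xs \<subseteq> chn G ys"
    unfolding fact_le_def using ord1 ord2 by blast
  ultimately show ?thesis by blast
qed

end
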